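(* Consider the principal–agent model described in the context, and let $(a^{\mathcal J},u^{\mathcal J})$ be any solution to $\max_{(a,u)\in\mathcal{J}}\{\mathbb{E}[X(a)\mid a]-c(a)-u\}$. There exists a quota-bonus contract (a contract of the form $s(x)=b\,\mathbf{1}_{\{x\ge q\}}$ with $q,b\in[0,\infty)$) that optimally solves the original problem (OP) if one of the following holds: (C1) $1-F(L(a^{\mathcal J})\mid a)\le \dfrac{c(a)+u^{\mathcal J}}{c(a^{\mathcal J})+u^{\mathcal J}}$ for all $a\in[0,a^{\mathcal J})$; or (C2) there exists $q>L(a^{\mathcal J})$ satisfying $\dfrac{-F_a(q\mid a^{\mathcal J})}{1-F(q\mid a^{\mathcal J})}=\dfrac{c'(a^{\mathcal J})}{c(a^{\mathcal J})+u^{\mathcal J}}$ such that $\dfrac{1-F(q\mid a)}{1-F(q\mid a^{\mathcal J})}\le\dfrac{c(a)+u^{\mathcal J}}{c(a^{\mathcal J})+u^{\mathcal J}}$ for all $a\ge0$.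
   Context: Model. An agent chooses effort $a\ge 0$. The outcome $X(a)$ is a continuous random variable with support $[L(a),\bar x]$, where $\bar x>0$ is fixed (possibly $+\infty$) and $L:[0,\infty)\to[0,\bar x)$ is nondecreasing on $[0,\infty)$ and continuously differentiable on $(0,\infty)$. Effort costs $c(a)$, where $c:[0,\infty)\to[0,\infty)$ is twice differentiable with $c'(a)>0$, $c''(a)\ge 0$. $X(a)$ has density $f(x\mid a)$ and cdf $F(x\mid a)$; for each fixed $x\in(L(a),\bar x]$, $f(x\mid a)$ and $F(x\mid a)$ are differentiable in $a>0$ with derivatives $f_a,F_a$, both continuous on $(L(a),\bar x]\times(0,\infty)$, and $F_a<0$ there. A contract is $s:\mathbb{R}_{\ge0}\to\mathbb{R}_{\ge0}$ (LL: $s\ge0$). $E^P(a,s)=\int_{L(a)}^{\bar x}[x-s(x)]f(x\mid a)\,dx$, $E^A(a,s)=\int_{L(a)}^{\bar x}s(x)f(x\mid a)\,dx-c(a)$, reservation utility $u_0\ge0$. The original problem (OP): maximize $E^P(a_s,s)$ over $(a_s,s)$ subject to (IC) $a_s\in\arg\max_{a\ge0}E^A(a,s)$, (IR) $E^A(a_s,s)\ge u_0$, (LL). Indifferent agents choose the effort most favorable to the principal. Standing assumption: (i) $\mathbb{E}[X(a)\mid a]<\infty$ for all $a\ge0$ and is continuous in $a$ on $[0,\infty)$; (ii) $\lim_{a\to\infty}\{\mathbb{E}[X(a)\mid a]-c(a)\}=-\infty$; (iii) $a\mapsto\sup_{x\in(L(a),\bar x]}f_a(x\mid a)/f(x\mid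 a)$ is continuous on $(0,\infty)$; (iv) for any contract $s$ with $\mathbb{E}[s(X(a))\mid a]<\infty$, the limit $h\uparrow0$ of $\int_{L(a)}^{\bar x}\frac{f(x\mid a+h)-f(x\mid a)}{h}s(x)\,dx$ may be taken inside the integral. $\mathcal{J}=\{(a,u)\mid a>0,\ u\ge u_0,\ \sup_{x\in(L(a),\bar x]} f_a(x\mid a)/f(x\mid a)\ge c'(a)/(c(a)+u)\}\cup\{(0,u)\mid u\ge u_0\}$. *)

theory Defs
  imports "HOL-Analysis.Analysis"
begin

text \<open>Outcome density f x a, cdf F x a, lower support end L a,
  upper support end xbar (an extended real, possibly infinity), effort cost c with
  derivatives c' and c''.\<close>

definition supp :: "(real \<Rightarrow> real) \<Rightarrow> ereal \<Rightarrow> real \<Rightarrow> real set" where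
  "supp L xbar a = {x. L a \<le> x \<and> ereal x \<le> xbar}"

definition osupp :: "(real \<Rightarrow> real) \<Rightarrow> ereal \<Rightarrow> real \<Rightarrow> real set" where
  "osupp L xbar a = {x. L a < x \<and> ereal x \<le> xbar}"

definition EXP :: "(real \<Rightarrow> real \<Rightarrow> real) \<Rightarrow> (real \<Rightarrow> real) \<Rightarrow> ereal \<Rightarrow> real \<Rightarrow> real" where
  "EXP f L xbar a = (LINT x:supp L xbar a|lborel. x * f x a)"

definition EP :: "(real \<Rightarrow> real \<Rightarrow> real) \<Rightarrow> (real \<Rightarrow> real) \<Rightarrow> ereal \<Rightarrow> real \<Rightarrow> (real \<Rightarrow> real) \<Rightarrow> real" where
  "EP f L xbar a s = (LINT x:supp L xbar a|lborel. (x - s x) * f x a)"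

definition EA :: "(real \<Rightarrow> real \<Rightarrow> real) \<Rightarrow> (real \<Rightarrow> real) \<Rightarrow> ereal \<Rightarrow> (real \<Rightarrow> real)
    \<Rightarrow> real \<Rightarrow> (real \<Rightarrow> real) \<Rightarrow> real" where
  "EA f L xbar c a s = (LINT x:supp L xbar a|lborel. s x * f x a) - c a"

definition contract :: "(real \<Rightarrow> real \<Rightarrow> real) \<Rightarrow> (real \<Rightarrow> real) \<Rightarrow> ereal \<Rightarrow> (real \<Rightarrow> real) \<Rightarrow> bool" where
  "contract f L xbar s \<longleftrightarrow> s \<in> borel_measurable lborel \<and> (\<forall>x\<ge>0. s x \<ge> 0) \<and>
     (\<forall>a\<ge>0. set_integrable lborel (supp L xbar a) (\<lambda>x. s x * f x a))"

definition OP_feasible where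
  "OP_feasible f L xbar c u0 a s \<longleftrightarrow> contract f L xbar s \<and> a \<ge> 0 \<and>
     (\<forall>a'\<ge>0. EA f L xbar c a' s \<le> EA f L xbar c a s) \<and> EA f L xbar c a s \<ge> u0"

definition OP_optimal where
  "OP_optimal f L xbar c u0 a s \<longleftrightarrow> OP_feasible f L xbar c u0 a s \<and>
     (\<forall>a' s'. OP_feasible f L xbar c u0 a' s' \<longrightarrow> EP f L xbar a' s' \<le> EP f L xbar a s)"

definition quota_bonus :: "real \<Rightarrow> real \<Rightarrow> real \<Rightarrow> real" where
  "quota_bonus q b = (\<lambda>x. if x \<ge> q then b else 0)"

definition Jset where
  "Jset f fa L xbar c c' u0 =
     {(a, u). a > 0 \<and> u \<ge> u0 \<and>
        (SUP x\<in>osupp L xbar a. ereal (fa x a / f x a)) \<ge> ereal (c' a / (c a + u))}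
     \<union> {(0, u) | u. u \<ge> u0}"

definition J_solution where
  "J_solution f fa L xbar c c' u0 aJ uJ \<longleftrightarrow> (aJ, uJ) \<in> Jset f fa L xbar c c' u0 \<and>
     (\<forall>(a, u) \<in> Jset f fa L xbar c c' u0.
        EXP f L xbar a - c a - u \<le> EXP f L xbar aJ - c aJ - uJ)"

definition pa_model ::
  "(real \<Rightarrow> real \<Rightarrow> real) \<Rightarrow> (real \<Rightarrow> real \<Rightarrow> real) \<Rightarrow> (real \<Rightarrow> real \<Rightarrow> real) \<Rightarrow> (real \<Rightarrow> real \<Rightarrow> real)
   \<Rightarrow> (real \<Rightarrow> real) \<Rightarrow> (real \<Rightarrow> real) \<Rightarrow> ereal
   \<Rightarrow> (real \<Rightarrow> real) \<Rightarrow> (real \<Rightarrow> real) \<Rightarrow> (real \<Rightarrow> real) \<Rightarrow> real \<Rightarrow> bool" where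
  "pa_model f F fa Fa L L' xbar c c' c'' u0 \<longleftrightarrow>
     xbar > 0 \<and> u0 \<ge> 0 \<and>
     \<comment> \<open>L : [0,oo) -> [0,xbar), nondecreasing, C^1 on (0,oo)\<close>
     (\<forall>a\<ge>0. L a \<ge> 0 \<and> ereal (L a) < xbar) \<and> mono_on {0..} L \<and>
     (\<forall>a>0. (L has_real_derivative L' a) (at a)) \<and> continuous_on {0<..} L' \<and>
     \<comment> \<open>c : [0,oo) -> [0,oo), twice differentiable, c' > 0, c'' \<ge> 0\<close>
     (\<forall>a\<ge>0. c a \<ge> 0 \<and> (c has_real_derivative c' a) (at a within {0..}) \<and>
        (c' has_real_derivative c'' a) (at a within {0..}) \<and> c' a > 0 \<and> c'' a \<ge> 0) \<and>
     \<comment> \<open>density with support [L a, xbar], and cdf\<close>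
     (\<forall>a\<ge>0. (\<lambda>x. f x a) \<in> borel_measurable lborel \<and>
        (\<forall>x. f x a \<ge> 0) \<and> (\<forall>x. x \<notin> supp L xbar a \<longrightarrow> f x a = 0) \<and>
        (\<forall>x\<in>osupp L xbar a. f x a > 0) \<and>
        set_integrable lborel (supp L xbar a) (\<lambda>x. f x a) \<and>
        (LINT x:supp L xbar a|lborel. f x a) = 1 \<and>
        (\<forall>x. F x a = (LINT t:(supp L xbar a \<inter> {..x})|lborel. f t a))) \<and>
     \<comment> \<open>differentiability in effort on (L a, xbar] x (0,oo)\<close>
     (\<forall>a>0. \<forall>x\<in>osupp L xbar a.
        ((\<lambda>b. f x b) has_real_derivative fa x a) (at a) \<and>
        ((\<lambda>b. F x b) has_real_derivative Fa x a) (at a) \<and> Fa x a < 0) \<and>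
     continuous_on {(x, a). a > 0 \<and> x \<in> osupp L xbar a} (\<lambda>(x, a). fa x a) \<and>
     continuous_on {(x, a). a > 0 \<and> x \<in> osupp L xbar a} (\<lambda>(x, a). Fa x a) \<and>
     \<comment> \<open>standing assumption (i)\<close>
     (\<forall>a\<ge>0. set_integrable lborel (supp L xbar a) (\<lambda>x. x * f x a)) \<and>
     continuous_on {0..} (EXP f L xbar) \<and>
     \<comment> \<open>(ii)\<close>
     filterlim (\<lambda>a. EXP f L xbar a - c a) at_bot at_top \<and>
     \<comment> \<open>(iii)\<close>
     continuous_on {0<..} (\<lambda>a. SUP x\<in>osupp L xbar a. ereal (fa x a / f x a)) \<and>
     \<comment> \<open>(iv)\<close>
     (\<forall>s a. a > 0 \<longrightarrow> s \<in> borel_measurable lborel \<longrightarrow> (\<forall>x\<ge>0. s x \<ge> 0) \<longrightarrow>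
        set_integrable lborel (supp L xbar a) (\<lambda>x. s x * f x a) \<longrightarrow>
        ((\<lambda>h. LINT x:supp L xbar a|lborel. (f x (a + h) - f x a) / h * s x)
           \<longlongrightarrow> (LINT x:supp L xbar a|lborel. fa x a * s x)) (at_left 0))"

end

theory Submission
  imports Defs
begin

lemma supp_sets[measurable]: "supp L xbar a \<in> sets lborel"
proof -
  have "supp L xbar a = {L a..} \<inter> {x. ereal x \<le> xbar}" by (auto simp: supp_def)
  moreover have "{x::real. ereal x \<le> xbar} \<in> sets borel" by measurable
  ultimately show ?thesis by simp
qed

lemma c_strict:
  fixes c c' :: "real \<Rightarrow> real"
  assumes "\<forall>a\<ge>0. (c has_real_derivative c' a) (at a within {0..}) \<and> c' a > 0"
    and "0 \<le> x" "x < y"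
  shows "c x < c y"
proof (rule DERIV_pos_imp_increasing_open[OF assms(3)])
  fix t assume "x < t" "t < y"
  then have t: "t > 0" using assms by auto
  then have d: "(c has_real_derivative c' t) (at t within {0..})" "c' t > 0" using assms(1) by auto
  have "at t within {0..} = at t" using t by (intro at_within_interior) auto
  then show "\<exists>d. DERIV c t :> d \<and> d > 0" using d by auto
next
  have "continuous_on {0..} c"
    unfolding continuous_on_eq_continuous_within using assms(1) DERIV_continuous by blast
  then show "continuous_on {x..y} c" by (rule continuous_on_subset) (use assms(2) in auto)
qed

lemma qb_meas[measurable]: "quota_bonus q b \<in> borel_measurable lborel"
proof -
  have "quota_bonus q b = (\<lambda>x. b * indicator {q..} x)"
    by (auto simp: quota_bonus_def indicator_def fun_eq_iff)
  then show ?thesis by simp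
qed

lemma qb_int:
  fixes f F :: "real \<Rightarrow> real \<Rightarrow> real"
  assumes fm: "(\<lambda>x. f x a) \<in> borel_measurable lborel"
    and fint: "set_integrable lborel (supp L xbar a) (\<lambda>x. f x a)"
    and f1: "(LINT x:supp L xbar a|lborel. f x a) = 1"
    and Fdef: "F q a = (LINT t:(supp L xbar a \<inter> {..q})|lborel. f t a)"
  shows "set_integrable lborel (supp L xbar a) (\<lambda>x. quota_bonus q b x * f x a)"
    and "(LINT x:supp L xbar a|lborel. quota_bonus q b x * f x a) = b * (1 - F q a)"
proof -
  let ?S = "supp L xbar a"
  have i1: "set_integrable lborel (?S \<inter> {q..}) (\<lambda>x. f x a)"
    by (rule set_integrable_subset[OF fint]) auto
  have i2: "set_integrable lborel (?S \<inter> {..<q}) (\<lambda>x. f x a)"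
    by (rule set_integrable_subset[OF fint]) auto
  have eq: "\<And>x. indicator ?S x *\<^sub>R (quota_bonus q b x * f x a) = b * (indicator (?S \<inter> {q..}) x *\<^sub>R f x a)"
    by (auto simp: quota_bonus_def indicator_def)
  show "set_integrable lborel ?S (\<lambda>x. quota_bonus q b x * f x a)"
    using i1 unfolding set_integrable_def eq by simp
  have A: "(LINT x:?S|lborel. quota_bonus q b x * f x a) = b * (LINT x:(?S \<inter> {q..})|lborel. f x a)"
    unfolding set_lebesgue_integral_def eq by simp
  have "?S = (?S \<inter> {..<q}) \<union> (?S \<inter> {q..})" by auto
  then have "1 = (LINT x:(?S \<inter> {..<q})|lborel. f x a) + (LINT x:(?S \<inter> {q..})|lborel. f x a)"
    using f1 set_integral_Un[OF _ i2 i1] by (metis (no_types, lifting) Int_assoc Int_empty_right atLeast_def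
        disjoint_iff lessThan_def lessThan_iff mem_Collect_eq not_le inf_commute)
  moreover have "(LINT x:(?S \<inter> {..<q})|lborel. f x a) = F q a"
    unfolding Fdef set_lebesgue_integral_def
  proof (rule integral_cong_AE)
    show "AE x in lborel. indicator (?S \<inter> {..<q}) x *\<^sub>R f x a = indicator (?S \<inter> {..q}) x *\<^sub>R f x a"
      using AE_lborel_singleton[of q] by eventually_elim (auto simp: indicator_def)
  qed (use fm in auto)
  ultimately show "(LINT x:?S|lborel. quota_bonus q b x * f x a) = b * (1 - F q a)"
    unfolding A by simp
qed

lemma EP_eq:
  assumes "set_integrable lborel (supp L xbar a) (\<lambda>x. x * f x a)"
    "set_integrable lborel (supp L xbar a) (\<lambda>x. s x * f x a)"
  shows "EP f L xbar a s = EXP f L xbar a - (EA f L xbar c a s + c a)"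
proof -
  have "EP f L xbar a s = (LINT x:supp L xbar a|lborel. x * f x a - s x * f x a)"
    unfolding EP_def by (simp add: algebra_simps)
  also have "\<dots> = EXP f L xbar a - (LINT x:supp L xbar a|lborel. s x * f x a)"
    unfolding EXP_def using set_integral_diff(2)[OF assms] .
  finally show ?thesis unfolding EA_def by simp
qed

lemma m_L:
  assumes "pa_model f F fa Fa L L' xbar c c' c'' u0"
  shows "\<forall>a\<ge>0. L a \<ge> 0 \<and> ereal (L a) < xbar"
  using assms unfolding pa_model_def by (elim conjE) assumption

lemma m_mono:
  assumes "pa_model f F fa Fa L L' xbar c c' c'' u0"
  shows "mono_on {0..} L"
  using assms unfolding pa_model_def by (elim conjE) assumption

lemma m_c:
  assumes "pa_model f F fa Fa L L' xbar c c' c'' u0"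
  shows "\<forall>a\<ge>0. c a \<ge> 0 \<and> (c has_real_derivative c' a) (at a within {0..}) \<and>
        (c' has_real_derivative c'' a) (at a within {0..}) \<and> c' a > 0 \<and> c'' a \<ge> 0"
  using assms unfolding pa_model_def by (elim conjE) assumption

lemma m_f:
  assumes "pa_model f F fa Fa L L' xbar c c' c'' u0"
  shows "\<forall>a\<ge>0. (\<lambda>x. f x a) \<in> borel_measurable lborel \<and>
        (\<forall>x. f x a \<ge> 0) \<and> (\<forall>x. x \<notin> supp L xbar a \<longrightarrow> f x a = 0) \<and>
        (\<forall>x\<in>osupp L xbar a. f x a > 0) \<and>
        set_integrable lborel (supp L xbar a) (\<lambda>x. f x a) \<and>
        (LINT x:supp L xbar a|lborel. f x a) = 1 \<and>
        (\<forall>x. F x a = (LINT t:(supp L xbar a \<inter> {..x})|lborel. f t a))"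
  using assms unfolding pa_model_def by (elim conjE) assumption

lemma m_x:
  assumes "pa_model f F fa Fa L L' xbar c c' c'' u0"
  shows "\<forall>a\<ge>0. set_integrable lborel (supp L xbar a) (\<lambda>x. x * f x a)"
  using assms unfolding pa_model_def by (elim conjE) assumption

lemma m_iv:
  assumes "pa_model f F fa Fa L L' xbar c c' c'' u0"
  shows "\<forall>s a. a > 0 \<longrightarrow> s \<in> borel_measurable lborel \<longrightarrow> (\<forall>x\<ge>0. s x \<ge> 0) \<longrightarrow>
        set_integrable lborel (supp L xbar a) (\<lambda>x. s x * f x a) \<longrightarrow>
        ((\<lambda>h. LINT x:supp L xbar a|lborel. (f x (a + h) - f x a) / h * s x)
           \<longlongrightarrow> (LINT x:supp L xbar a|lborel. fa x a * s x)) (at_left 0)"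
  using assms unfolding pa_model_def by (elim conjE) assumption

lemma snn_supp:
  assumes "\<forall>a\<ge>0. L a \<ge> (0::real)" "\<forall>x\<ge>0. s x \<ge> (0::real)" "b \<ge> 0" "x \<in> supp L xbar b"
  shows "s x \<ge> 0"
proof -
  have "L b \<le> x" using assms(4) unfolding supp_def by simp
  moreover have "L b \<ge> 0" using assms(1,3) by simp
  ultimately have "x \<ge> 0" by linarith
  then show ?thesis using assms(2) by simp
qed

lemma m_u0:
  assumes "pa_model f F fa Fa L L' xbar c c' c'' u0"
  shows "u0 \<ge> 0"
  using assms unfolding pa_model_def by (elim conjE) assumption

lemma qb_EA:
  assumes model: "pa_model f F fa Fa L L' xbar c c' c'' u0" and a0: "a \<ge> 0"
  shows "set_integrable lborel (supp L xbar a) (\<lambda>x. quota_bonus q b x * f x a)"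
    and "EA f L xbar c a (quota_bonus q b) = b * (1 - F q a) - c a"
    and "F q a \<ge> 0" and "1 - F q a \<ge> 0"
proof -
  have A: "(\<lambda>x. f x a) \<in> borel_measurable lborel \<and>
        (\<forall>x. f x a \<ge> 0) \<and> (\<forall>x. x \<notin> supp L xbar a \<longrightarrow> f x a = 0) \<and>
        (\<forall>x\<in>osupp L xbar a. f x a > 0) \<and>
        set_integrable lborel (supp L xbar a) (\<lambda>x. f x a) \<and>
        (LINT x:supp L xbar a|lborel. f x a) = 1 \<and>
        (\<forall>x. F x a = (LINT t:(supp L xbar a \<inter> {..x})|lborel. f t a))"
    using m_f[OF model] a0 by blast
  have fm: "(\<lambda>x. f x a) \<in> borel_measurable lborel" using A by (elim conjE)
  have fnn: "\<forall>x. f x a \<ge> 0" using A by (elim conjE)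
  have fint: "set_integrable lborel (supp L xbar a) (\<lambda>x. f x a)" using A by (elim conjE)
  have f1: "(LINT x:supp L xbar a|lborel. f x a) = 1" using A by (elim conjE)
  have Fall: "\<forall>x. F x a = (LINT t:(supp L xbar a \<inter> {..x})|lborel. f t a)" using A by (elim conjE)
  have Fq: "F q a = (LINT t:(supp L xbar a \<inter> {..q})|lborel. f t a)" using Fall by (rule spec)
  show "set_integrable lborel (supp L xbar a) (\<lambda>x. quota_bonus q b x * f x a)"
    by (rule qb_int(1)[where f=f and a=a and F=F and q=q and L=L and xbar=xbar, OF fm fint f1 Fq])
  show "EA f L xbar c a (quota_bonus q b) = b * (1 - F q a) - c a"
    unfolding EA_def using qb_int(2)[where f=f and a=a and F=F and q=q and L=L and xbar=xbar, OF fm fint f1 Fq] by simp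
  show "F q a \<ge> 0" unfolding Fq set_lebesgue_integral_def
    by (rule integral_nonneg_AE, rule AE_I2) (simp add: fnn)
  have "0 \<le> (LINT x:supp L xbar a|lborel. quota_bonus q 1 x * f x a)"
    unfolding set_lebesgue_integral_def
    by (rule integral_nonneg_AE, rule AE_I2) (simp add: fnn quota_bonus_def)
  also have "\<dots> = 1 * (1 - F q a)" by (rule qb_int(2)[where f=f and a=a and F=F and q=q and L=L and xbar=xbar, OF fm fint f1 Fq])
  finally show "1 - F q a \<ge> 0" by simp
qed

lemma relax:
  assumes model: "pa_model f F fa Fa L L' xbar c c' c'' u0"
    and feas: "OP_feasible f L xbar c u0 a s"
  shows "(a, EA f L xbar c a s) \<in> Jset f fa L xbar c c' u0"
proof -
  have Lnn: "\<forall>a\<ge>0. L a \<ge> 0" and Lmono: "mono_on {0..} L"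
    and cfacts: "\<forall>a\<ge>0. c a \<ge> 0 \<and> (c has_real_derivative c' a) (at a within {0..}) \<and> c' a > 0"
    and ffacts: "\<forall>a\<ge>0. (\<lambda>x. f x a) \<in> borel_measurable lborel \<and>
        (\<forall>x. f x a \<ge> 0) \<and> (\<forall>x\<in>osupp L xbar a. f x a > 0)"
    and iv: "\<forall>s a. a > 0 \<longrightarrow> s \<in> borel_measurable lborel \<longrightarrow> (\<forall>x\<ge>0. s x \<ge> 0) \<longrightarrow>
        set_integrable lborel (supp L xbar a) (\<lambda>x. s x * f x a) \<longrightarrow>
        ((\<lambda>h. LINT x:supp L xbar a|lborel. (f x (a + h) - f x a) / h * s x)
           \<longlongrightarrow> (LINT x:supp L xbar a|lborel. fa x a * s x)) (at_left 0)"
  proof -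
    note A = m_L[OF model] m_mono[OF model] m_c[OF model] m_f[OF model] m_iv[OF model]
    show "\<forall>a\<ge>0. L a \<ge> 0" using A(1) by simp
    show "mono_on {0..} L" using A(2) .
    show "\<forall>a\<ge>0. c a \<ge> 0 \<and> (c has_real_derivative c' a) (at a within {0..}) \<and> c' a > 0" using A(3) by simp
    show "\<forall>a\<ge>0. (\<lambda>x. f x a) \<in> borel_measurable lborel \<and>
        (\<forall>x. f x a \<ge> 0) \<and> (\<forall>x\<in>osupp L xbar a. f x a > 0)" using A(4) by simp
    show "\<forall>s a. a > 0 \<longrightarrow> s \<in> borel_measurable lborel \<longrightarrow> (\<forall>x\<ge>0. s x \<ge> 0) \<longrightarrow>
        set_integrable lborel (supp L xbar a) (\<lambda>x. s x * f x a) \<longrightarrow>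
        ((\<lambda>h. LINT x:supp L xbar a|lborel. (f x (a + h) - f x a) / h * s x)
           \<longlongrightarrow> (LINT x:supp L xbar a|lborel. fa x a * s x)) (at_left 0)" using A(5) .
  qed
  from feas have sm: "s \<in> borel_measurable lborel" and snn: "\<forall>x\<ge>0. s x \<ge> 0"
    and sint: "\<forall>a\<ge>0. set_integrable lborel (supp L xbar a) (\<lambda>x. s x * f x a)"
    and a0: "a \<ge> 0" and IC: "\<forall>a'\<ge>0. EA f L xbar c a' s \<le> EA f L xbar c a s"
    and IR: "EA f L xbar c a s \<ge> u0"
    unfolding OP_feasible_def contract_def by auto
  define u where "u = EA f L xbar c a s"
  show ?thesis
  proof (cases "a = 0")
    case True
    have "(a, EA f L xbar c a s) \<in> {(0, u) | u. u \<ge> u0}" using IR by (simp add: True)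
    then show ?thesis unfolding Jset_def by (rule UnI2)
  next
    case False
    then have apos: "a > 0" using a0 by auto
    let ?S = "supp L xbar a"
    define I where "I b = (LINT x:?S|lborel. s x * f x b)" for b
    have Ia: "I a = u + c a" unfolding I_def u_def EA_def by simp
    define D where "D = (LINT x:?S|lborel. fa x a * s x)"
    have key: "(c (a + h) - c a) / h \<le> (LINT x:?S|lborel. (f x (a + h) - f x a) / h * s x)"
      if h: "-a < h" "h < 0" for h
    proof -
      define b where "b = a + h"
      have b0: "b \<ge> 0" "b < a" using h unfolding b_def by auto
      have "L b \<le> L a" using Lmono b0 a0 by (auto intro: mono_onD)
      then have sub: "?S \<subseteq> supp L xbar b" by (auto simp: supp_def)
      have intb: "set_integrable lborel (supp L xbar b) (\<lambda>x. s x * f x b)" using sint b0 by simp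
      have intbS: "set_integrable lborel ?S (\<lambda>x. s x * f x b)"
        by (rule set_integrable_subset[OF intb supp_sets sub])
      have inta: "set_integrable lborel ?S (\<lambda>x. s x * f x a)" using sint a0 by simp
      have "(LINT x:?S|lborel. (f x (a + h) - f x a) / h * s x)
          = (LINT x:?S|lborel. (1/h) * (s x * f x b - s x * f x a))"
        unfolding b_def by (simp add: algebra_simps diff_divide_distrib)
      also have "\<dots> = (I b - I a) / h"
        unfolding I_def set_integral_mult_right set_integral_diff(2)[OF intbS inta] by simp
      finally have eq: "(LINT x:?S|lborel. (f x (a + h) - f x a) / h * s x) = (I b - I a) / h" .
      have "I b \<le> (LINT x:supp L xbar b|lborel. s x * f x b)"
        unfolding I_def set_lebesgue_integral_def
      proof (rule integral_mono)
        show "integrable lborel (\<lambda>x. indicator ?S x *\<^sub>R (s x * f x b))"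
          using intbS unfolding set_integrable_def .
        show "integrable lborel (\<lambda>x. indicator (supp L xbar b) x *\<^sub>R (s x * f x b))"
          using intb unfolding set_integrable_def .
        fix x
        have "x \<in> supp L xbar b \<Longrightarrow> 0 \<le> s x * f x b"
        proof -
          assume x: "x \<in> supp L xbar b"
          have "L b \<ge> 0" using Lnn b0 by blast
          then have "s x \<ge> 0" using snn_supp[OF Lnn snn b0(1) x] by simp
          moreover have "f x b \<ge> 0" using ffacts b0 by blast
          ultimately show ?thesis by simp
        qed
        then show "indicator ?S x *\<^sub>R (s x * f x b) \<le> indicator (supp L xbar b) x *\<^sub>R (s x * f x b)"
          using sub by (auto simp: indicator_def)
      qed
      also have "\<dots> = EA f L xbar c b s + c b" unfolding EA_def by simp
      also have "\<dots> \<le> u + c b" using IC b0 unfolding u_def by simp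
      finally have "I b - I a \<le> c b - c a" using Ia by simp
      then have "(c b - c a) / h \<le> (I b - I a) / h"
        using h by (intro divide_right_mono_neg) auto
      then show ?thesis unfolding eq unfolding b_def .
    qed
    have lim1: "((\<lambda>h. LINT x:?S|lborel. (f x (a + h) - f x a) / h * s x) \<longlongrightarrow> D) (at_left 0)"
    proof -
      have si: "set_integrable lborel ?S (\<lambda>x. s x * f x a)" by (rule sint[rule_format, OF a0])
      moreover have T: "a > 0 \<longrightarrow> s \<in> borel_measurable lborel \<longrightarrow> (\<forall>x\<ge>0. s x \<ge> 0) \<longrightarrow>
        set_integrable lborel ?S (\<lambda>x. s x * f x a) \<longrightarrow>
        ((\<lambda>h. LINT x:?S|lborel. (f x (a + h) - f x a) / h * s x)
           \<longlongrightarrow> (LINT x:?S|lborel. fa x a * s x)) (at_left 0)"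
        by (rule iv[THEN spec, THEN spec])
      ultimately show ?thesis unfolding D_def using mp[OF mp[OF mp[OF mp[OF T apos] sm] snn] si] by simp
    qed
    have wi: "at a within {0..} = at a" by (intro at_within_interior) (use apos in auto)
    have "(c has_real_derivative c' a) (at a within {0..})" using cfacts[rule_format, OF a0] by (elim conjE)
    then have "(c has_real_derivative c' a) (at a)" unfolding wi .
    then have l0: "((\<lambda>h. (c (a + h) - c a) / h) \<longlongrightarrow> c' a) (at 0)" unfolding DERIV_def .
    have lim2: "((\<lambda>h. (c (a + h) - c a) / h) \<longlongrightarrow> c' a) (at_left 0)"
      using filterlim_at_split[THEN iffD1, OF l0] by (elim conjE) assumption
    have ev: "eventually (\<lambda>h. (c (a + h) - c a) / h \<le> (LINT x:?S|lborel. (f x (a + h) - f x a) / h * s x)) (at_left 0)"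
    proof -
      have "eventually (\<lambda>h. h \<in> {-a<..<0}) (at_left 0)" using eventually_at_left_real[of "-a" 0] apos by simp
      then show ?thesis by (rule eventually_mono) (intro key; simp)
    qed
    have Dge: "c' a \<le> D"
      by (rule tendsto_le[OF trivial_limit_at_left_real lim1 lim2 ev])
    have cpos: "c' a > 0" using cfacts[rule_format, OF a0] by (elim conjE)
    have Dint: "set_integrable lborel ?S (\<lambda>x. fa x a * s x)"
    proof (rule ccontr)
      assume "\<not> ?thesis"
      then have "D = 0" unfolding D_def set_integrable_def set_lebesgue_integral_def
        by (rule not_integrable_integral_eq)
      then show False using Dge cpos by simp
    qed
    have Inn: "I a \<ge> 0" unfolding I_def set_lebesgue_integral_def
    proof (rule integral_nonneg_AE, rule AE_I2)
      fix x
      show "0 \<le> indicator ?S x *\<^sub>R (s x * f x a)"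
      proof (cases "x \<in> ?S")
        case True
        then have "s x \<ge> 0" using snn_supp[OF Lnn snn a0 True] by simp
        moreover have "f x a \<ge> 0" using ffacts[rule_format, OF a0] by simp
        ultimately show ?thesis using True by simp
      qed simp
    qed
    have "(SUP x\<in>osupp L xbar a. ereal (fa x a / f x a)) \<ge> ereal (c' a / (c a + u))"
    proof (rule ccontr)
      assume "\<not> ?thesis"
      then have "(SUP x\<in>osupp L xbar a. ereal (fa x a / f x a)) < ereal (c' a / (c a + u))" by simp
      then obtain z where z1: "(SUP x\<in>osupp L xbar a. ereal (fa x a / f x a)) < ereal z"
        and z2': "ereal z < ereal (c' a / (c a + u))"
        using ereal_dense2 by blast
      from z2' have z2: "z < c' a / (c a + u)" by simp
      have pt: "fa x a < z * f x a" if "x \<in> osupp L xbar a" for x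
      proof -
        have "ereal (fa x a / f x a) \<le> (SUP x\<in>osupp L xbar a. ereal (fa x a / f x a))"
          using that by (rule SUP_upper)
        then have "ereal (fa x a / f x a) < ereal z" using z1 by (rule le_less_trans)
        then have "fa x a / f x a < z" by simp
        moreover have "f x a > 0" using ffacts a0 that by auto
        ultimately show ?thesis by (simp add: pos_divide_less_eq)
      qed
      have "D \<le> (LINT x:?S|lborel. z * (s x * f x a))"
        unfolding D_def set_lebesgue_integral_def
      proof (rule integral_mono_AE)
        show "integrable lborel (\<lambda>x. indicator ?S x *\<^sub>R (fa x a * s x))"
          using Dint unfolding set_integrable_def .
        show "integrable lborel (\<lambda>x. indicator ?S x *\<^sub>R (z * (s x * f x a)))"
          using sint a0 unfolding set_integrable_def by (simp add: mult.left_commute)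
        show "AE x in lborel. indicator ?S x *\<^sub>R (fa x a * s x) \<le> indicator ?S x *\<^sub>R (z * (s x * f x a))"
          using AE_lborel_singleton[of "L a"]
        proof eventually_elim
          case (elim x)
          show ?case
          proof (cases "x \<in> ?S")
            case True
            then have xo: "x \<in> osupp L xbar a" using elim by (auto simp: supp_def osupp_def)
            have "s x \<ge> 0" using snn_supp[OF Lnn snn a0 True] by simp
            then have "fa x a * s x \<le> (z * f x a) * s x"
              using pt[OF xo] by (intro mult_right_mono) auto
            then show ?thesis using True by (simp add: algebra_simps)
          qed simp
        qed
      qed
      also have "\<dots> = z * I a" unfolding I_def by simp
      finally have "c' a \<le> z * (c a + u)" using Dge Ia by (simp add: algebra_simps)
      moreover have "c a + u \<ge> 0" using Inn Ia by simp
      ultimately show False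
      proof (cases "c a + u = 0")
        case True
        then show False using \<open>c' a \<le> z * (c a + u)\<close> cpos by simp
      next
        case False
        then have "c a + u > 0" using \<open>c a + u \<ge> 0\<close> by simp
        then have "z * (c a + u) < c' a" using z2 by (simp add: pos_less_divide_eq)
        then show False using \<open>c' a \<le> z * (c a + u)\<close> by simp
      qed
    qed
    then have "(a, u) \<in> {(a, u). a > 0 \<and> u \<ge> u0 \<and>
        (SUP x\<in>osupp L xbar a. ereal (fa x a / f x a)) \<ge> ereal (c' a / (c a + u))}"
      using apos IR unfolding u_def by simp
    then show ?thesis unfolding Jset_def u_def by (rule UnI1)
  qed
qed


theorem theorem2:
  fixes f F fa Fa :: "real \<Rightarrow> real \<Rightarrow> real"
    and L L' c c' c'' :: "real \<Rightarrow> real"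
    and xbar :: ereal and u0 aJ uJ :: real
  assumes model: "pa_model f F fa Fa L L' xbar c c' c'' u0"
    and sol: "J_solution f fa L xbar c c' u0 aJ uJ"
    and cond: "(\<forall>a. 0 \<le> a \<and> a < aJ \<longrightarrow>
                  1 - F (L aJ) a \<le> (c a + uJ) / (c aJ + uJ))
             \<or> (\<exists>q. L aJ < q \<and> ereal q < xbar \<and>
                  - Fa q aJ / (1 - F q aJ) = c' aJ / (c aJ + uJ) \<and>
                  (\<forall>a\<ge>0. (1 - F q a) / (1 - F q aJ) \<le> (c a + uJ) / (c aJ + uJ)))"
  shows "\<exists>q b. q \<ge> 0 \<and> b \<ge> 0 \<and> (\<exists>a. OP_optimal f L xbar c u0 a (quota_bonus q b))"
proof -
  have Jmem: "(aJ, uJ) \<in> Jset f fa L xbar c c' u0"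
    and Jopt: "\<forall>(a, u) \<in> Jset f fa L xbar c c' u0.
        EXP f L xbar a - c a - u \<le> EXP f L xbar aJ - c aJ - uJ"
    using sol unfolding J_solution_def by blast+
  have "(aJ > 0 \<and> uJ \<ge> u0) \<or> (aJ = 0 \<and> uJ \<ge> u0)"
    using Jmem unfolding Jset_def by blast
  then have aJ0: "aJ \<ge> 0" and uJu0: "uJ \<ge> u0" by auto
  have u00: "u0 \<ge> 0" by (rule m_u0[OF model])
  have Lnn: "\<forall>a\<ge>0. L a \<ge> 0" using m_L[OF model] by simp
  have cfacts: "\<forall>a\<ge>0. c a \<ge> 0 \<and> (c has_real_derivative c' a) (at a within {0..}) \<and> c' a > 0"
    using m_c[OF model] by simp
  have cder: "\<forall>a\<ge>0. (c has_real_derivative c' a) (at a within {0..}) \<and> c' a > 0"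
    using cfacts by simp
  have cnn: "c a \<ge> 0" if "a \<ge> 0" for a using cfacts that by simp
  have cmono: "c x \<le> c y" if "0 \<le> x" "x \<le> y" for x y
  proof (cases "x = y")
    case False then have "x < y" using that by simp
    then show ?thesis using c_strict[OF cder that(1)] by (simp add: less_imp_le)
  qed simp
  define K where "K = c aJ + uJ"
  have K0: "K \<ge> 0" using cnn[OF aJ0] uJu0 u00 unfolding K_def by simp
  have Kpos: "K > 0" if "aJ > 0"
  proof -
    have "c 0 < c aJ" using c_strict[OF cder _ that] by simp
    then show ?thesis using cnn[of 0] uJu0 u00 unfolding K_def by simp
  qed
  have opt: "EP f L xbar a' s' \<le> EXP f L xbar aJ - c aJ - uJ"
    if Fe: "OP_feasible f L xbar c u0 a' s'" for a' s'
  proof -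
    have J: "(a', EA f L xbar c a' s') \<in> Jset f fa L xbar c c' u0" by (rule relax[OF model Fe])
    have le: "EXP f L xbar a' - c a' - EA f L xbar c a' s' \<le> EXP f L xbar aJ - c aJ - uJ"
      using bspec[OF Jopt J] by simp
    have a'0: "a' \<ge> 0" and si: "set_integrable lborel (supp L xbar a') (\<lambda>x. s' x * f x a')"
      using Fe unfolding OP_feasible_def contract_def by auto
    have xi: "set_integrable lborel (supp L xbar a') (\<lambda>x. x * f x a')"
      using m_x[OF model] a'0 by simp
    show ?thesis using EP_eq[where f=f and a=a' and L=L and xbar=xbar and s=s' and c=c, OF xi si] le by simp
  qed
  have build: "\<exists>q b. q \<ge> 0 \<and> b \<ge> 0 \<and> (\<exists>a. OP_optimal f L xbar c u0 a (quota_bonus q b))"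
    if q0: "q \<ge> 0" and b0: "b \<ge> 0" and ICq: "\<forall>a\<ge>0. b * (1 - F q a) - c a \<le> uJ"
      and atJ: "b * (1 - F q aJ) - c aJ = uJ" for q b
  proof -
    define s where "s = quota_bonus q b"
    have EAs: "EA f L xbar c a s = b * (1 - F q a) - c a" if "a \<ge> 0" for a
      unfolding s_def by (rule qb_EA(2)[OF model that])
    have ints: "set_integrable lborel (supp L xbar a) (\<lambda>x. s x * f x a)" if "a \<ge> 0" for a
      unfolding s_def by (rule qb_EA(1)[OF model that])
    have con: "contract f L xbar s"
      unfolding contract_def using ints b0 by (auto simp: s_def quota_bonus_def)
    have fe: "OP_feasible f L xbar c u0 aJ s"
      unfolding OP_feasible_def using con aJ0 EAs[OF aJ0] atJ ICq EAs uJu0 by auto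
    have xi: "set_integrable lborel (supp L xbar aJ) (\<lambda>x. x * f x aJ)"
      using m_x[OF model] aJ0 by simp
    have EPs: "EP f L xbar aJ s = EXP f L xbar aJ - c aJ - uJ"
      using EP_eq[where f=f and a=aJ and L=L and xbar=xbar and s=s and c=c, OF xi ints[OF aJ0]] EAs[OF aJ0] atJ by simp
    have "OP_optimal f L xbar c u0 aJ s"
      unfolding OP_optimal_def using fe opt EPs by auto
    then show ?thesis using q0 b0 unfolding s_def by blast
  qed
  define C1 where "C1 \<longleftrightarrow> (\<forall>a. 0 \<le> a \<and> a < aJ \<longrightarrow> 1 - F (L aJ) a \<le> (c a + uJ) / (c aJ + uJ))"
  show ?thesis
  proof (cases C1)
    case True
    have q0: "L aJ \<ge> 0" using Lnn aJ0 by simp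
    have FJ: "F (L aJ) aJ = 0"
    proof -
      have A: "\<forall>x. F x aJ = (LINT t:(supp L xbar aJ \<inter> {..x})|lborel. f t aJ)"
        and fm: "(\<lambda>x. f x aJ) \<in> borel_measurable lborel"
        using m_f[OF model] aJ0 by simp_all
      have "F (L aJ) aJ = (LINT t:(supp L xbar aJ \<inter> {..L aJ})|lborel. f t aJ)" using A by (rule spec)
      also have "\<dots> = 0" unfolding set_lebesgue_integral_def
      proof (rule integral_eq_zero_AE)
        show "AE x in lborel. indicator (supp L xbar aJ \<inter> {..L aJ}) x *\<^sub>R f x aJ = 0"
          using AE_lborel_singleton[of "L aJ"] by eventually_elim (auto simp: indicator_def supp_def)
      qed
      finally show ?thesis .
    qed
    show ?thesis
    proof (rule build[of "L aJ" K])
      show "L aJ \<ge> 0" by (rule q0)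
      show "K \<ge> 0" by (rule K0)
      show "K * (1 - F (L aJ) aJ) - c aJ = uJ" using FJ unfolding K_def by simp
      show "\<forall>a\<ge>0. K * (1 - F (L aJ) a) - c a \<le> uJ"
      proof (intro allI impI)
        fix a :: real assume a0: "a \<ge> 0"
        show "K * (1 - F (L aJ) a) - c a \<le> uJ"
        proof (cases "a < aJ")
          case True
          then have "aJ > 0" using a0 by simp
          then have "K > 0" by (rule Kpos)
          have "1 - F (L aJ) a \<le> (c a + uJ) / K" using \<open>C1\<close> a0 True unfolding C1_def K_def by blast
          then have "K * (1 - F (L aJ) a) \<le> c a + uJ" using \<open>K > 0\<close> by (simp add: le_divide_eq mult.commute)
          then show ?thesis by simp
        next
          case False
          then have "c aJ \<le> c a" using cmono aJ0 by simp
          moreover have "F (L aJ) a \<ge> 0" by (rule qb_EA(3)[OF model a0])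
          then have "K * (1 - F (L aJ) a) \<le> K" using K0 by (simp add: mult_left_le)
          ultimately show ?thesis unfolding K_def by simp
        qed
      qed
    qed
  next
    case False
    then have Kp: "K > 0"
    proof (cases "aJ > 0")
      case False
      then have "aJ = 0" using aJ0 by simp
      then have C1 unfolding C1_def by simp
      then show ?thesis using \<open>\<not> C1\<close> by simp
    qed (rule Kpos)
    from False cond obtain q where qL: "L aJ < q"
      and haz: "- Fa q aJ / (1 - F q aJ) = c' aJ / (c aJ + uJ)"
      and rat: "\<forall>a\<ge>0. (1 - F q a) / (1 - F q aJ) \<le> (c a + uJ) / (c aJ + uJ)"
      unfolding C1_def by blast
    define G where "G = 1 - F q aJ"
    have G0: "G \<ge> 0" unfolding G_def by (rule qb_EA(4)[OF model aJ0])
    have "c' aJ > 0" using cfacts aJ0 by simp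
    then have "c' aJ / (c aJ + uJ) > 0" using Kp unfolding K_def by simp
    then have "G \<noteq> 0" using haz unfolding G_def by auto
    then have Gp: "G > 0" using G0 by simp
    show ?thesis
    proof (rule build[of q "K / G"])
      show "q \<ge> 0" using qL Lnn aJ0 by force
      show "K / G \<ge> 0" using K0 Gp by simp
      show "K / G * (1 - F q aJ) - c aJ = uJ" using Gp unfolding G_def[symmetric] K_def by simp
      show "\<forall>a\<ge>0. K / G * (1 - F q a) - c a \<le> uJ"
      proof (intro allI impI)
        fix a :: real assume a0: "a \<ge> 0"
        have "(1 - F q a) / G \<le> (c a + uJ) / K" using rat a0 unfolding G_def K_def by blast
        then have "K * ((1 - F q a) / G) \<le> K * ((c a + uJ) / K)" using K0 by (rule mult_left_mono)
        then have "K / G * (1 - F q a) \<le> c a + uJ" using Kp by simp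
        then show "K / G * (1 - F q a) - c a \<le> uJ" by simp
      qed
    qed
  qed
qed

end
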